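(* Let $\rho_{AB}\in M_2(\mathbb{C})\otimes M_d(\mathbb{C})$ be a bipartite state, let $\{P_a\}_{a=0}^1$ be a nontrivial projective measurement on subsystem $A$ (i.e. $P_0,P_1$ are rank-one orthogonal projections on $\mathbb{C}^2$ with $P_0+P_1=\mathbb{1}$), and set $\rho_a=\mathrm{Tr}_A\big((P_a\otimes\mathbb{1})\rho_{AB}\big)$. Then: (i) if $\mathrm{rank}(\rho_0)=\mathrm{rank}(\rho_1)=1$, then $\mathrm{rank}(\rho_{AB})\ne3$; (ii) if $d\ge3$, $\mathrm{rank}(\rho_{AB})=3$ and $\mathrm{rank}(\rho_0)=0$, then $\mathrm{rank}(\rho_1)=3$; (iii) if $d=2$ and $\mathrm{rank}(\rho_{AB})=3$, then neither $\rho_0$ nor $\rho_1$ has rank zero. *)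

theory Defs
  imports "HOL-Analysis.Analysis"
begin

definition ctrans :: "complex^'n^'m \<Rightarrow> complex^'m^'n" where
  "ctrans A = (\<chi> i j. cnj (A $ j $ i))"

definition hermitian :: "complex^'n^'n \<Rightarrow> bool" where
  "hermitian A \<longleftrightarrow> ctrans A = A"

definition psd :: "complex^'n^'n \<Rightarrow> bool" where
  "psd A \<longleftrightarrow> hermitian A \<and>
     (\<forall>x::complex^'n. 0 \<le> Re (\<Sum>i\<in>UNIV. cnj (x $ i) * (A *v x) $ i))"

definition density :: "complex^'n^'n \<Rightarrow> bool" where
  "density A \<longleftrightarrow> psd A \<and> trace A = 1"

definition orth_proj :: "complex^'n^'n \<Rightarrow> bool" where
  "orth_proj P \<longleftrightarrow> P ** P = P \<and> hermitian P"

definition kron :: "complex^'a^'a \<Rightarrow> complex^'b^'b \<Rightarrow> complex^('a \<times> 'b)^('a \<times> 'b)" where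
  "kron A B = (\<chi> p q. A $ fst p $ fst q * B $ snd p $ snd q)"

definition ptrace_A :: "complex^('a::finite \<times> 'b)^('a \<times> 'b) \<Rightarrow> complex^'b^'b" where
  "ptrace_A M = (\<chi> j k. \<Sum>i\<in>UNIV. M $ (i, j) $ (i, k))"

end

theory Submission imports Defs begin

lemma dim_rows_le_cols_gen:
  fixes A :: "'a::field^'n^'m"
  shows "vec.dim (rows A) \<le> vec.dim (columns A)"
proof -
  obtain B where B: "B \<subseteq> columns A" "vec.independent B" "columns A \<subseteq> vec.span B"
    "card B = vec.dim (columns A)"
    using vec.basis_exists by blast
  have fB: "finite B" using B(2) vec.independent_bound_general by blast
  have "\<forall>j. \<exists>u. (\<Sum>b\<in>B. u b *s b) = column j A"
  proof
    fix j
    have "column j A \<in> vec.span B" using B(3) by (auto simp: columns_def)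
    then show "\<exists>u. (\<Sum>b\<in>B. u b *s b) = column j A"
      using vec.span_finite[OF fB] by auto
  qed
  then obtain c where c: "\<And>j. (\<Sum>b\<in>B. c j b *s b) = column j A" by metis
  define R where "R b = (\<chi> j. c j b)" for b
  have "rows A \<subseteq> vec.span (R ` B)"
  proof
    fix r assume "r \<in> rows A"
    then obtain i where r: "r = row i A" by (auto simp: rows_def)
    have "r = (\<Sum>b\<in>B. (b $ i) *s R b)"
    unfolding vec_eq_iff
    proof
      fix j
      have "r $ j = column j A $ i" by (simp add: r row_def column_def)
      also have "\<dots> = (\<Sum>b\<in>B. c j b * b $ i)" by (simp flip: c add: sum_component)
      finally show "r $ j = (\<Sum>b\<in>B. (b $ i) *s R b) $ j"
        by (simp add: sum_component R_def mult.commute)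
    qed
    also have "\<dots> \<in> vec.span (R ` B)"
    proof (rule vec.span_sum)
      fix b assume "b \<in> B"
      then have "R b \<in> vec.span (R ` B)" by (intro vec.span_base imageI)
      then show "(b $ i) *s R b \<in> vec.span (R ` B)" by (rule vec.span_scale)
    qed
    finally show "r \<in> vec.span (R ` B)" .
  qed
  then have "vec.dim (rows A) \<le> card (R ` B)"
    using fB by (simp add: vec.dim_le_card)
  also have "\<dots> \<le> card B" using fB by (rule card_image_le)
  finally show ?thesis by (simp only: B(4))
qed

lemma rank_cols_gen: "rank (A::'a::field^'n^'m) = vec.dim (columns A)"
  unfolding row_rank_def_gen
  by (metis dim_rows_le_cols_gen le_antisym rows_transpose columns_transpose)

lemma mvm_axis_gen: "(A::'a::field^'n^'m) *v axis k 1 = column k A"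
  by (simp add: vec_eq_iff matrix_vector_mult_def axis_def column_def if_distrib cong: if_cong)

lemma rank_range_gen: "rank (A::'a::field^'n^'m) = vec.dim (range ((*v) A))"
proof -
  have "vec.span (columns A) = vec.span (range ((*v) A))"
    unfolding vec.span_eq
  proof
    show "columns A \<subseteq> vec.span (range ((*v) A))"
    proof
      fix x assume "x \<in> columns A"
      then obtain k where "x = column k A" by (auto simp: columns_def)
      then have "x = A *v axis k 1" by (simp add: mvm_axis_gen)
      then show "x \<in> vec.span (range ((*v) A))" by (simp add: vec.span_base)
    qed
    show "range ((*v) A) \<subseteq> vec.span (columns A)"
      using matrix_vector_mult_in_columnspace_gen by (auto simp: image_subset_iff)
  qed
  then show ?thesis unfolding rank_cols_gen by (rule vec.span_eq_dim)
qed

lemma rank_mul_le_left_gen: "rank ((A::'a::field^'n^'m) ** (B::'a^'k^'n)) \<le> rank A"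
  unfolding rank_range_gen
proof (rule vec.dim_subset)
  show "range ((*v) (A ** B)) \<subseteq> range ((*v) A)"
  proof
    fix y assume "y \<in> range ((*v) (A ** B))"
    then obtain x where "y = (A ** B) *v x" by auto
    then have "y = A *v (B *v x)" by (simp add: matrix_vector_mul_assoc)
    then show "y \<in> range ((*v) A)" by blast
  qed
qed

lemma rank_mul_le_right_gen: "rank ((A::'a::field^'n^'m) ** (B::'a^'k^'n)) \<le> rank B"
proof -
  have "range ((*v) (A ** B)) = (*v) A ` range ((*v) B)"
    by (simp add: image_image matrix_vector_mul_assoc matrix_mul_assoc)
  then show ?thesis unfolding rank_range_gen
    by (metis vec.dim_image_le vec.linear_axioms)
qed

lemma rank_add_le_gen: "rank ((A::'a::field^'n^'m) + B) \<le> rank A + rank B"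
proof -
  let ?S = "range ((*v) A)" and ?T = "range ((*v) B)"
  have sS: "vec.subspace ?S" and sT: "vec.subspace ?T"
    by (metis vec.subspace_UNIV vec.subspace_image)+
  have "range ((*v) (A + B)) \<subseteq> {x + y |x y. x \<in> ?S \<and> y \<in> ?T}"
    by (auto simp: matrix_vector_mult_add_rdistrib)
  then have "rank (A + B) \<le> vec.dim {x + y |x y. x \<in> ?S \<and> y \<in> ?T}"
    unfolding rank_range_gen by (rule vec.dim_subset)
  also have "\<dots> \<le> vec.dim ?S + vec.dim ?T"
    using vec.dim_sums_Int[OF sS sT] by linarith
  finally show ?thesis by (simp add: rank_range_gen)
qed

lemma rank_le_card_gen: "rank (A::'a::field^'n^'m) \<le> CARD('m)"
  unfolding rank_range_gen by (rule dim_subset_UNIV_cart_gen)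

lemma rank_zero_gen: "rank (0::'a::field^'n^'m) = 0"
proof -
  have "range ((*v) (0::'a::field^'n^'m)) = {0}" by (auto simp: matrix_vector_mult_def vec_eq_iff)
  then show ?thesis unfolding rank_range_gen by simp
qed


definition inn :: "complex^'n \<Rightarrow> complex^'n \<Rightarrow> complex" where
  "inn x y = (\<Sum>i\<in>UNIV. cnj (x $ i) * y $ i)"

lemma inn_adj:
  fixes M :: "complex^'n^'m"
  shows "inn x (ctrans M *v y) = inn (M *v x) y"
proof -
  have "inn x (ctrans M *v y) = (\<Sum>i\<in>UNIV. \<Sum>j\<in>UNIV. cnj (x $ i) * cnj (M $ j $ i) * y $ j)"
    by (simp add: inn_def ctrans_def matrix_vector_mult_def sum_distrib_left mult.assoc)
  also have "\<dots> = (\<Sum>j\<in>UNIV. \<Sum>i\<in>UNIV. cnj (x $ i) * cnj (M $ j $ i) * y $ j)"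
    by (rule sum.swap)
  also have "\<dots> = inn (M *v x) y"
    by (simp add: inn_def matrix_vector_mult_def sum_distrib_right sum_distrib_left cnj_sum mult.commute mult.left_commute)
  finally show ?thesis .
qed

lemma inn_diff_left: "inn (x - y) z = inn x z - inn y z"
  by (simp add: inn_def sum_subtractf left_diff_distrib)
lemma inn_diff_right: "inn x (y - z) = inn x y - inn x z"
  by (simp add: inn_def sum_subtractf right_diff_distrib)
lemma inn_scale_left: "inn (c *s x) y = cnj c * inn x y"
  by (simp add: inn_def sum_distrib_left mult.assoc)
lemma inn_scale_right: "inn x (c *s y) = c * inn x y"
  by (simp add: inn_def sum_distrib_left mult.left_commute)

lemma inn_self: "inn w w = complex_of_real (\<Sum>i\<in>UNIV. (cmod (w $ i))\<^sup>2)"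
  unfolding inn_def of_real_sum complex_norm_square by (simp add: mult.commute)

lemma inn_self_zero: "(\<Sum>i\<in>UNIV. (cmod (w $ i))\<^sup>2) = 0 \<Longrightarrow> w = 0"
  by (simp add: sum_nonneg_eq_0_iff vec_eq_iff)

lemma psd_cs:
  fixes A :: "complex^'n^'n"
  assumes "psd A" and x0: "inn x (A *v x) = 0"
  shows "A *v x = 0"
proof (rule ccontr)
  assume ne: "A *v x \<noteq> 0"
  define w where "w = A *v x"
  have herm: "ctrans A = A" using assms(1) by (simp add: psd_def hermitian_def)
  have pos: "\<And>z. 0 \<le> Re (inn z (A *v z))" using assms(1) by (simp add: psd_def inn_def)
  define S where "S = (\<Sum>i\<in>UNIV. (cmod (w $ i))\<^sup>2)"
  define C where "C = Re (inn w (A *v w))"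
  have S0: "S \<ge> 0" unfolding S_def by (simp add: sum_nonneg)
  have "S \<noteq> 0" using inn_self_zero[of w] ne by (auto simp: S_def w_def)
  with S0 have Spos: "S > 0" by simp
  have C0: "C \<ge> 0" using pos unfolding C_def .
  have xw: "inn x (A *v w) = inn w w"
    using inn_adj[of x A w] herm by (simp add: w_def)
  have wx: "inn w (A *v x) = inn w w" by (simp add: w_def)
  define t where "t = S / (C + 1)"
  have tpos: "t > 0" using Spos C0 by (simp add: t_def)
  define z where "z = x - complex_of_real t *s w"
  have "inn z (A *v z) = inn x (A *v x) - complex_of_real t * inn x (A *v w)
        - complex_of_real t * inn w (A *v x)
        + complex_of_real t * complex_of_real t * inn w (A *v w)"
    by (simp add: z_def matrix_vector_mult_diff_distrib vector_scalar_commute inn_diff_left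
        inn_diff_right inn_scale_left inn_scale_right algebra_simps)
  also have "\<dots> = - 2 * complex_of_real t * inn w w + complex_of_real t * complex_of_real t * inn w (A *v w)"
    using x0 xw wx by simp
  finally have "Re (inn z (A *v z)) = - 2 * t * S + t * t * C"
    by (simp add: inn_self S_def C_def)
  also have "\<dots> = t * (- 2 * S + t * C)" by (simp add: algebra_simps)
  also have "\<dots> < 0"
  proof (rule mult_pos_neg[OF tpos])
    have "t * C = S * (C / (C + 1))" using C0 by (simp add: t_def)
    also have "\<dots> \<le> S * 1" using C0 Spos by (intro mult_left_mono) auto
    finally show "- 2 * S + t * C < 0" using Spos by simp
  qed
  finally show False using pos[of z] by simp
qed


lemma rank_psd_compress:
  fixes R :: "complex^'n^'n" and V :: "complex^'k^'n"
  assumes "psd R"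
  shows "rank (R ** V) \<le> rank (ctrans V ** R ** V)"
proof -
  let ?S = "range ((*v) (R ** V))"
  have sub: "vec.subspace ?S" by (metis vec.subspace_UNIV vec.subspace_image)
  have img: "(*v) (ctrans V) ` ?S = range ((*v) (ctrans V ** R ** V))"
    by (simp add: image_image matrix_vector_mul_assoc matrix_mul_assoc)
  have inj: "inj_on ((*v) (ctrans V)) (vec.span ?S)"
    unfolding vec.span_eq_iff[THEN iffD2, OF sub] vec.inj_on_iff_eq_0[OF sub]
  proof (intro ballI impI)
    fix w assume "w \<in> ?S" and w0: "ctrans V *v w = 0"
    then obtain y where wy: "w = (R ** V) *v y" by auto
    have w2: "w = R *v (V *v y)" by (simp add: wy matrix_vector_mul_assoc)
    have "inn (V *v y) (R *v (V *v y)) = inn y (ctrans V *v w)"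
      unfolding inn_adj w2 ..
    also have "\<dots> = 0" by (simp add: w0 inn_def)
    finally have "R *v (V *v y) = 0" by (rule psd_cs[OF assms])
    then show "w = 0" by (simp add: wy matrix_vector_mul_assoc)
  qed
  show ?thesis unfolding rank_range_gen
    using vec.dim_image_eq[OF vec.linear_axioms inj] img by simp
qed

definition Vm :: "complex^2 \<Rightarrow> complex^'d^(2 \<times> 'd)" where
  "Vm u = (\<chi> p k. u $ fst p * (if snd p = k then 1 else 0))"

definition outer :: "complex^2 \<Rightarrow> complex^2^2" where
  "outer u = (\<chi> i j. u $ i * cnj (u $ j))"

lemma Vm_Vm: "(Vm u :: complex^'d::finite^(2 \<times> 'd)) ** ctrans (Vm u) = kron (outer u) (mat 1)"
proof -
  have "((Vm u :: complex^'d::finite^(2 \<times> 'd)) ** ctrans (Vm u)) $ p $ q = kron (outer u) (mat 1) $ p $ q" for p q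
  proof -
    have "((Vm u :: complex^'d::finite^(2 \<times> 'd)) ** ctrans (Vm u)) $ p $ q =
      (\<Sum>k\<in>UNIV. if snd p = k then u $ fst p * cnj (u $ fst q) * (if snd q = k then 1 else 0) else 0)"
      unfolding matrix_matrix_mult_def Vm_def ctrans_def vec_lambda_beta by (rule sum.cong) auto
    also have "\<dots> = kron (outer u) (mat 1) $ p $ q"
      by (simp add: kron_def outer_def mat_def)
    finally show ?thesis .
  qed
  then show ?thesis by (simp add: vec_eq_iff)
qed

lemma sum_pair_delta:
  "(\<Sum>q\<in>(UNIV::('a::finite \<times> 'b::finite) set). if snd q = k then f q else 0) = (\<Sum>i\<in>UNIV. f (i, k))"
proof -
  have "(\<Sum>q\<in>(UNIV::('a \<times> 'b) set). if snd q = k then f q else 0) =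
        (\<Sum>i\<in>UNIV. \<Sum>j\<in>UNIV. if snd (i, j) = k then f (i, j) else 0)"
    unfolding sum.cartesian_product UNIV_Times_UNIV by (auto simp: case_prod_beta intro!: sum.cong)
  also have "\<dots> = (\<Sum>i\<in>UNIV. f (i, k))" by simp
  finally show ?thesis .
qed

lemma mm_entry: "((A::'a::semiring_1^'n^'m) ** (B::'a^'k^'n)) $ i $ j = (\<Sum>l\<in>UNIV. A $ i $ l * B $ l $ j)"
  by (simp add: matrix_matrix_mult_def)

lemma ptrace_Vm:
  fixes R :: "complex^(2 \<times> 'd::finite)^(2 \<times> 'd)"
  shows "ptrace_A (kron (outer u) (mat 1) ** R) = ctrans (Vm u) ** R ** Vm u"
proof -
  have "ptrace_A (kron (outer u) (mat 1) ** R) $ j $ k =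
        (ctrans (Vm u) ** R ** Vm u) $ j $ k" for j k
  proof -
    have "ptrace_A (kron (outer u) (mat 1) ** R) $ j $ k =
      (\<Sum>i\<in>UNIV. \<Sum>q\<in>UNIV. if snd q = j then u $ i * cnj (u $ fst q) * R $ q $ (i, k) else 0)"
      unfolding ptrace_A_def matrix_matrix_mult_def kron_def outer_def mat_def vec_lambda_beta
      by (intro sum.cong refl) auto
    also have "\<dots> = (\<Sum>i\<in>UNIV. \<Sum>i'\<in>UNIV. u $ i * cnj (u $ i') * R $ (i', j) $ (i, k))"
      by (simp only: sum_pair_delta fst_conv)
    finally have L: "ptrace_A (kron (outer u) (mat 1) ** R) $ j $ k =
       (\<Sum>i\<in>UNIV. \<Sum>i'\<in>UNIV. u $ i * cnj (u $ i') * R $ (i', j) $ (i, k))" .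
    have M: "(ctrans (Vm u) ** R) $ j $ (i, k) = (\<Sum>i'\<in>UNIV. cnj (u $ i') * R $ (i', j) $ (i, k))" for i
    proof -
      have "(ctrans (Vm u) ** R) $ j $ (i, k) =
         (\<Sum>p\<in>UNIV. if snd p = j then cnj (u $ fst p) * R $ p $ (i, k) else 0)"
        unfolding matrix_matrix_mult_def Vm_def ctrans_def vec_lambda_beta
        by (intro sum.cong refl) auto
      also have "\<dots> = (\<Sum>i'\<in>UNIV. cnj (u $ i') * R $ (i', j) $ (i, k))"
        by (simp only: sum_pair_delta fst_conv)
      finally show ?thesis .
    qed
    have "(ctrans (Vm u) ** R ** Vm u) $ j $ k =
       (\<Sum>q\<in>UNIV. if snd q = k then (ctrans (Vm u) ** R) $ j $ q * u $ fst q else 0)"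
      unfolding mm_entry by (intro sum.cong refl) (auto simp: Vm_def)
    also have "\<dots> = (\<Sum>i\<in>UNIV. (ctrans (Vm u) ** R) $ j $ (i, k) * u $ i)"
      by (simp only: sum_pair_delta fst_conv)
    also have "\<dots> = (\<Sum>i\<in>UNIV. \<Sum>i'\<in>UNIV. u $ i * cnj (u $ i') * R $ (i', j) $ (i, k))"
      by (simp add: M sum_distrib_left mult.commute mult.left_commute mult.assoc)
    finally show ?thesis using L by simp
  qed
  then show ?thesis by (simp add: vec_eq_iff)
qed


lemma num2:
  fixes a c :: real and b :: complex
  assumes e1: "a * a + (cmod b)\<^sup>2 = a" and e2: "c * c + (cmod b)\<^sup>2 = c"
    and e3: "b * complex_of_real (a + c - 1) = 0"
    and n0: "\<not> (a = 0 \<and> b = 0 \<and> c = 0)" and n1: "\<not> (a = 1 \<and> b = 0 \<and> c = 1)"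
  shows "a + c = 1 \<and> a * c = (cmod b)\<^sup>2"
proof (cases "b = 0")
  case True
  then have "a * a = a" "c * c = c" using e1 e2 by auto
  then have "a = 0 \<or> a = 1" "c = 0 \<or> c = 1"
    by (metis mult_cancel_right1 mult_eq_0_iff)+
  then show ?thesis using n0 n1 True by auto
next
  case False
  have "complex_of_real (a + c - 1) = 0" using e3 False by (simp only: mult_eq_0_iff) blast
  then have "a + c - 1 = 0" by (simp only: of_real_eq_0_iff)
  then have c: "c = 1 - a" by simp
  have "a * c = a - a * a" by (simp add: c algebra_simps)
  then show ?thesis using e1 c by simp
qed

lemma exu:
  fixes a c :: real and b :: complex
  assumes "a + c = 1" and ac: "a * c = (cmod b)\<^sup>2" and e1: "a * a + (cmod b)\<^sup>2 = a"
  shows "\<exists>u1 u2. u1 * cnj u1 = complex_of_real a \<and> u1 * cnj u2 = b \<and> u2 * cnj u2 = complex_of_real c"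
proof -
  have a0: "a \<ge> 0"
  proof (rule ccontr)
    assume "\<not> a \<ge> 0"
    then have "a * a > 0" by (simp add: mult_neg_neg)
    then show False using e1 \<open>\<not> a \<ge> 0\<close> by (smt (verit) zero_le_power2)
  qed
  show ?thesis
  proof (cases "a = 0")
    case True
    then have "(cmod b)\<^sup>2 = 0" using e1 by simp
    then have "b = 0" by simp
    moreover have "c = 1" using assms True by simp
    ultimately show ?thesis using True by (intro exI[of _ 0] exI[of _ 1]) simp
  next
    case False
    then have ap: "a > 0" using a0 by simp
    define s where "s = sqrt a"
    have sp: "s > 0" using ap by (simp add: s_def)
    have ss: "s * s = a" using a0 by (simp add: s_def)
    have bb: "cnj b * b = complex_of_real ((cmod b)\<^sup>2)"
      by (metis complex_norm_square mult.commute)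
    have "(cnj b / complex_of_real s) * cnj (cnj b / complex_of_real s) = cnj b * b / complex_of_real (s * s)"
      by simp
    also have "\<dots> = complex_of_real ((cmod b)\<^sup>2 / a)" by (simp add: bb ss)
    also have "(cmod b)\<^sup>2 / a = c" using ac ap by (simp add: field_simps)
    finally have 3: "(cnj b / complex_of_real s) * cnj (cnj b / complex_of_real s) = complex_of_real c" .
    have 1: "complex_of_real s * cnj (complex_of_real s) = complex_of_real a"
      by (simp flip: of_real_mult add: ss)
    have 2: "complex_of_real s * cnj (cnj b / complex_of_real s) = b"
      using sp by simp
    show ?thesis using 1 2 3 by blast
  qed
qed

lemma factor2:
  fixes P :: "complex^2^2"
  assumes op: "orth_proj P" and nz: "P \<noteq> 0" and ni: "P \<noteq> mat 1"
  shows "\<exists>u. P = outer u"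
proof -
  have herm: "P $ i $ j = cnj (P $ j $ i)" for i j
  proof -
    have "ctrans P = P" using op by (simp add: orth_proj_def hermitian_def)
    then have "ctrans P $ i $ j = P $ i $ j" by simp
    then show ?thesis by (simp add: ctrans_def)
  qed
  have idem: "(P ** P) $ i $ j = P $ i $ j" for i j using op by (simp add: orth_proj_def)
  define a where "a = Re (P $ 1 $ 1)"
  define c where "c = Re (P $ 2 $ 2)"
  define b where "b = P $ 1 $ 2"
  have Pa: "P $ 1 $ 1 = complex_of_real a"
    using herm[of 1 1] unfolding a_def by (simp add: complex_eq_iff)
  have Pc: "P $ 2 $ 2 = complex_of_real c"
    using herm[of 2 2] unfolding c_def by (simp add: complex_eq_iff)
  have Pb: "P $ 2 $ 1 = cnj b" using herm[of 2 1] by (simp add: b_def)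
  have bb: "b * cnj b = complex_of_real ((cmod b)\<^sup>2)"
    by (rule complex_norm_square[symmetric])
  have bb': "cnj b * b = complex_of_real ((cmod b)\<^sup>2)"
    by (metis complex_norm_square mult.commute)
  have "complex_of_real (a * a + (cmod b)\<^sup>2) = complex_of_real a"
    using idem[of 1 1] by (simp add: mm_entry sum_2 Pa Pb bb flip: b_def)
  then have e1: "a * a + (cmod b)\<^sup>2 = a" by (simp only: of_real_eq_iff)
  have "complex_of_real (c * c + (cmod b)\<^sup>2) = complex_of_real c"
    using idem[of 2 2] by (simp add: mm_entry sum_2 Pc Pb bb' add.commute flip: b_def)
  then have e2: "c * c + (cmod b)\<^sup>2 = c" by (simp only: of_real_eq_iff)
  have "complex_of_real a * b + b * complex_of_real c = b"
    using idem[of 1 2] by (simp add: mm_entry sum_2 Pa Pc flip: b_def)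
  then have e3: "b * complex_of_real (a + c - 1) = 0" by (simp add: algebra_simps)
  have n0: "\<not> (a = 0 \<and> b = 0 \<and> c = 0)"
  proof
    assume h: "a = 0 \<and> b = 0 \<and> c = 0"
    have "P = 0" unfolding vec_eq_iff forall_2 using h Pa Pb Pc by (simp add: b_def)
    then show False using nz by simp
  qed
  have n1: "\<not> (a = 1 \<and> b = 0 \<and> c = 1)"
  proof
    assume h: "a = 1 \<and> b = 0 \<and> c = 1"
    have "P = mat 1" unfolding vec_eq_iff forall_2 using h Pa Pb Pc by (simp add: b_def mat_def)
    then show False using ni by simp
  qed
  from num2[OF e1 e2 e3 n0 n1] have "a + c = 1" "a * c = (cmod b)\<^sup>2" by auto
  from exu[OF this e1] obtain u1 u2 where
    u: "u1 * cnj u1 = complex_of_real a" "u1 * cnj u2 = b" "u2 * cnj u2 = complex_of_real c" by blast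
  have u21: "u2 * cnj u1 = cnj b" using u(2) by (metis complex_cnj_cnj complex_cnj_mult mult.commute)
  have "P = outer (vector [u1, u2])"
    unfolding vec_eq_iff forall_2 outer_def using u u21 Pa Pb Pc by (simp add: b_def)
  then show ?thesis by blast
qed


lemma kron_add: "kron A C + kron B C = kron (A + B) C"
  by (simp add: vec_eq_iff kron_def distrib_right)

lemma kron_id: "kron (mat 1) (mat 1) = (mat 1 :: complex^('a::finite \<times> 'b::finite)^('a \<times> 'b))"
  by (auto simp: vec_eq_iff kron_def mat_def prod_eq_iff)

lemma rank_compress_le:
  fixes R :: "complex^'n^'n" and V :: "complex^'k^'n"
  shows "rank (ctrans V ** R ** V) \<le> rank R"
  using rank_mul_le_left_gen[of "ctrans V ** R" V] rank_mul_le_right_gen[of "ctrans V" R] by linarith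

theorem lemma4:
  fixes \<rho> :: "complex^(2 \<times> 'd::finite)^(2 \<times> 'd)"
    and P0 P1 :: "complex^2^2"
  assumes "density \<rho>"
    and "orth_proj P0" and "orth_proj P1"
    and "rank P0 = 1" and "rank P1 = 1"
    and "P0 + P1 = mat 1"
  shows "(rank (ptrace_A (kron P0 (mat 1) ** \<rho>)) = 1 \<and>
          rank (ptrace_A (kron P1 (mat 1) ** \<rho>)) = 1 \<longrightarrow> rank \<rho> \<noteq> 3)
       \<and> (CARD('d) \<ge> 3 \<and> rank \<rho> = 3 \<and> rank (ptrace_A (kron P0 (mat 1) ** \<rho>)) = 0
            \<longrightarrow> rank (ptrace_A (kron P1 (mat 1) ** \<rho>)) = 3)
       \<and> (CARD('d) = 2 \<and> rank \<rho> = 3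
            \<longrightarrow> rank (ptrace_A (kron P0 (mat 1) ** \<rho>)) \<noteq> 0
              \<and> rank (ptrace_A (kron P1 (mat 1) ** \<rho>)) \<noteq> 0)"
proof -
  have psd: "psd \<rho>" using assms(1) by (simp add: density_def)
  have nz0: "P0 \<noteq> 0"
  proof
    assume "P0 = 0" then have "rank P0 = 0" by (simp add: rank_zero_gen)
    then show False using assms(4) by simp
  qed
  have nz1: "P1 \<noteq> 0"
  proof
    assume "P1 = 0" then have "rank P1 = 0" by (simp add: rank_zero_gen)
    then show False using assms(5) by simp
  qed
  have ni0: "P0 \<noteq> mat 1"
  proof
    assume "P0 = mat 1" then have "P1 = 0" using assms(6) by simp
    then show False using nz1 by simp
  qed
  have ni1: "P1 \<noteq> mat 1"
  proof
    assume "P1 = mat 1" then have "P0 = 0" using assms(6) by simp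
    then show False using nz0 by simp
  qed
  obtain u0 where u0: "P0 = outer u0" using factor2[OF assms(2) nz0 ni0] by blast
  obtain u1 where u1: "P1 = outer u1" using factor2[OF assms(3) nz1 ni1] by blast
  define V0 where "V0 = (Vm u0 :: complex^'d^(2 \<times> 'd))"
  define V1 where "V1 = (Vm u1 :: complex^'d^(2 \<times> 'd))"
  define r0 where "r0 = rank (ptrace_A (kron P0 (mat 1) ** \<rho>))"
  define r1 where "r1 = rank (ptrace_A (kron P1 (mat 1) ** \<rho>))"
  have r0: "r0 = rank (ctrans V0 ** \<rho> ** V0)" unfolding r0_def u0 V0_def by (simp add: ptrace_Vm)
  have r1: "r1 = rank (ctrans V1 ** \<rho> ** V1)" unfolding r1_def u1 V1_def by (simp add: ptrace_Vm)
  have r0le: "r0 \<le> rank \<rho>" unfolding r0 by (rule rank_compress_le)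
  have r1le: "r1 \<le> rank \<rho>" unfolding r1 by (rule rank_compress_le)
  have r0c: "r0 \<le> CARD('d)" unfolding r0 by (rule rank_le_card_gen)
  have r1c: "r1 \<le> CARD('d)" unfolding r1 by (rule rank_le_card_gen)
  have id: "V0 ** ctrans V0 + V1 ** ctrans V1 = mat 1"
    unfolding V0_def V1_def Vm_Vm kron_add u0[symmetric] u1[symmetric] assms(6) kron_id ..
  have decomp: "\<rho> = (\<rho> ** V0) ** ctrans V0 + (\<rho> ** V1) ** ctrans V1"
  proof -
    have "\<rho> = \<rho> ** (V0 ** ctrans V0 + V1 ** ctrans V1)" by (simp add: id)
    also have "\<dots> = (\<rho> ** V0) ** ctrans V0 + (\<rho> ** V1) ** ctrans V1"
      by (simp add: matrix_add_ldistrib matrix_mul_assoc)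
    finally show ?thesis .
  qed
  have "rank \<rho> \<le> rank ((\<rho> ** V0) ** ctrans V0) + rank ((\<rho> ** V1) ** ctrans V1)"
  proof -
    have "rank \<rho> = rank ((\<rho> ** V0) ** ctrans V0 + (\<rho> ** V1) ** ctrans V1)"
      by (rule arg_cong[OF decomp])
    then show ?thesis using rank_add_le_gen by (simp only:)
  qed
  also have "\<dots> \<le> rank (\<rho> ** V0) + rank (\<rho> ** V1)"
    using rank_mul_le_left_gen[of "\<rho> ** V0" "ctrans V0"] rank_mul_le_left_gen[of "\<rho> ** V1" "ctrans V1"]
    by linarith
  also have "\<dots> \<le> r0 + r1"
    using rank_psd_compress[OF psd, of V0] rank_psd_compress[OF psd, of V1] r0 r1 by linarith
  finally have sub: "rank \<rho> \<le> r0 + r1" .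
  show ?thesis
    unfolding r0_def[symmetric] r1_def[symmetric]
  proof (intro conjI impI)
    assume "r0 = 1 \<and> r1 = 1" then show "rank \<rho> \<noteq> 3" using sub by linarith
  next
    assume "3 \<le> CARD('d) \<and> rank \<rho> = 3 \<and> r0 = 0" then show "r1 = 3" using sub r1le by linarith
  next
    assume "CARD('d) = 2 \<and> rank \<rho> = 3" then show "r0 \<noteq> 0" using sub r1c by linarith
  next
    assume "CARD('d) = 2 \<and> rank \<rho> = 3" then show "r1 \<noteq> 0" using sub r0c by linarith
  qed
qed

end
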